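(* For every Orlicz function $\Psi$, the map $f\mapsto\Lambda_f$ is bounded from $\mathfrak{B}^\Psi$ into $L^\Psi(\mathbb{D},\mathcal{A})$, i.e. there is $C>0$ with $\|\Lambda_f\|_{L^\Psi(\mathcal{A})}\le C\|f\|_{\mathfrak{B}^\Psi}$ for all $f\in\mathfrak{B}^\Psi$.
   Context: $\mathbb{D}$ is the open unit disk, $\mathcal{A}$ the normalized area measure $dx\,dy/\pi$. An Orlicz function is a nonnegative increasing convex $\Psi\colon[0,\infty)\to[0,\infty)$ with $\Psi(0)=0$, $\Psi(x)>0$ for $x>0$, $\Psi(\infty)=\infty$. $L^\Psi(\mathcal{A})$ has the Luxemburg norm $\inf\{C>0:\int_{\mathbb{D}}\Psi(|g|/C)\,d\mathcal{A}\le1\}$ and $\mathfrak{B}^\Psi$ is its subspace of analytic functions. The Hastings–Luecking sets are, for $k=2^n+j-1$ with $n\ge0$, $0\le j\le2^n-1$: $\Delta_k=\{z\in\mathbb{D}:1-2^{-n}\le|z|<1-2^{-n-1},\ (2j-1)\pi/2^n\le\arg z<(2j+1)\pi/2^n\}$ (they partition $\mathbb{D}$; $\Delta_0=\{|z|<1/2\}$). For $f$ analytic on $\mathbb{D}$, $\Lambda_f=\sum_{k\ge0}\big(\sup_{\Delta_k}|f|\big)\mathbf{1}_{\Delta_k}$. *)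

theory Defs
  imports "HOL-Analysis.Analysis"
begin

definition orlicz_function :: "(real \<Rightarrow> real) \<Rightarrow> bool" where
  "orlicz_function \<Psi> \<longleftrightarrow>
     (\<forall>x\<ge>0. \<Psi> x \<ge> 0) \<and> mono_on {0..} \<Psi> \<and> convex_on {0..} \<Psi> \<and>
     \<Psi> 0 = 0 \<and> (\<forall>x>0. \<Psi> x > 0) \<and> filterlim \<Psi> at_top at_top"

definition areaD :: "complex measure" where
  "areaD = density (restrict_space lborel (ball 0 1)) (\<lambda>_. ennreal (1 / pi))"

definition orlicz_modular :: "(real \<Rightarrow> real) \<Rightarrow> (complex \<Rightarrow> 'b::real_normed_vector) \<Rightarrow> real \<Rightarrow> ennreal" where
  "orlicz_modular \<Psi> g C = (\<integral>\<^sup>+ z. ennreal (\<Psi> (norm (g z) / C)) \<partial>areaD)"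

definition in_Orlicz :: "(real \<Rightarrow> real) \<Rightarrow> (complex \<Rightarrow> 'b::real_normed_vector) \<Rightarrow> bool" where
  "in_Orlicz \<Psi> g \<longleftrightarrow> g \<in> borel_measurable areaD \<and> (\<exists>C>0. orlicz_modular \<Psi> g C \<le> 1)"

definition lux_norm :: "(real \<Rightarrow> real) \<Rightarrow> (complex \<Rightarrow> 'b::real_normed_vector) \<Rightarrow> real" where
  "lux_norm \<Psi> g = Inf {C. C > 0 \<and> orlicz_modular \<Psi> g C \<le> 1}"

definition in_Bergman_Orlicz :: "(real \<Rightarrow> real) \<Rightarrow> (complex \<Rightarrow> complex) \<Rightarrow> bool" where
  "in_Bergman_Orlicz \<Psi> f \<longleftrightarrow> f holomorphic_on ball 0 1 \<and> in_Orlicz \<Psi> f"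

text \<open>Hastings--Luecking sets; the argument is taken modulo 2 pi.\<close>
definition HL_set :: "nat \<Rightarrow> complex set" where
  "HL_set k = {z. \<exists>n j::nat. k = 2^n + j - 1 \<and> j \<le> 2^n - 1 \<and>
      1 - 1 / 2^n \<le> norm z \<and> norm z < 1 - 1 / 2^(n+1) \<and>
      (\<exists>m::int. (2 * real j - 1) * pi / 2^n \<le> Arg z + 2 * pi * m \<and>
                Arg z + 2 * pi * m < (2 * real j + 1) * pi / 2^n)}"

definition Lambda :: "(complex \<Rightarrow> complex) \<Rightarrow> complex \<Rightarrow> real" where
  "Lambda f z = (\<Sum>k. (SUP w\<in>HL_set k. norm (f w)) * indicator (HL_set k) z)"

end

theory Submission
  imports Defs "HOL-Complex_Analysis.Complex_Analysis" "HOL-Probability.Probability"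
begin


definition Psip :: "(real \<Rightarrow> real) \<Rightarrow> real \<Rightarrow> real" where
  "Psip \<Psi> x = \<Psi> (max 0 x)"

context
  fixes \<Psi> :: "real \<Rightarrow> real"
  assumes orl: "orlicz_function \<Psi>"
begin

lemma Psi_nonneg: "x \<ge> 0 \<Longrightarrow> \<Psi> x \<ge> 0" and Psi_mono: "mono_on {0..} \<Psi>"
  and Psi_convex: "convex_on {0..} \<Psi>" and Psi_0: "\<Psi> 0 = 0"
  using orl by (auto simp: orlicz_function_def)

lemma Psip_nonneg: "Psip \<Psi> x \<ge> 0"
  by (simp add: Psip_def Psi_nonneg)

lemma Psip_0 [simp]: "Psip \<Psi> 0 = 0"
  by (simp add: Psip_def Psi_0)

lemma Psip_eq: "x \<ge> 0 \<Longrightarrow> Psip \<Psi> x = \<Psi> x"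
  by (simp add: Psip_def)

lemma Psip_mono: "mono (Psip \<Psi>)"
  unfolding Psip_def
  by (intro monoI) (auto intro!: mono_onD[OF Psi_mono])

lemma Psip_mono': "x \<le> y \<Longrightarrow> Psip \<Psi> x \<le> Psip \<Psi> y"
  using Psip_mono by (auto dest: monoD)

lemma Psip_borel [measurable]: "Psip \<Psi> \<in> borel_measurable borel"
  by (rule borel_measurable_mono[OF Psip_mono])

lemma Psip_convex: "convex_on UNIV (Psip \<Psi>)"
proof (rule convex_onI)
  fix t x y :: real
  assume t: "0 < t" "t < 1"
  define w where "w = (1 - t) * max 0 x + t * max 0 y"
  have w0: "w \<ge> 0" using t by (simp add: w_def)
  have "max 0 ((1 - t) *\<^sub>R x + t *\<^sub>R y) \<le> w"
  proof -
    have a: "(1-t)*x \<le> (1-t)*max 0 x" using t by (intro mult_left_mono) auto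
    have b: "t*y \<le> t * max 0 y" using t by (intro mult_left_mono) auto
    show ?thesis using a b w0 by (simp add: w_def)
  qed
  then have "Psip \<Psi> ((1 - t) *\<^sub>R x + t *\<^sub>R y) \<le> \<Psi> w"
    unfolding Psip_def using w0 by (intro mono_onD[OF Psi_mono]) auto
  also have "\<Psi> w \<le> (1 - t) * \<Psi> (max 0 x) + t * \<Psi> (max 0 y)"
    using convex_onD[OF Psi_convex, of t "max 0 x" "max 0 y"] t unfolding w_def by simp
  finally show "Psip \<Psi> ((1 - t) *\<^sub>R x + t *\<^sub>R y) \<le> (1 - t) * Psip \<Psi> x + t * Psip \<Psi> y"
    by (simp add: Psip_def)
qed simp

lemma Psip_cont: "continuous_on UNIV (Psip \<Psi>)"
  by (rule convex_on_continuous[OF open_UNIV Psip_convex])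

lemma Psip_scale:
  assumes "M \<ge> 1"
  shows "Psip \<Psi> (x / M) \<le> Psip \<Psi> x / M"
proof (cases "x \<ge> 0")
  case True
  have "Psip \<Psi> ((1 - 1/M) *\<^sub>R 0 + (1/M) *\<^sub>R x) \<le> (1 - 1/M) * Psip \<Psi> 0 + (1/M) * Psip \<Psi> x"
    using assms by (intro convex_onD[OF Psip_convex]) auto
  then show ?thesis by simp
next
  case False
  then have "x / M \<le> 0" using assms by (simp add: divide_nonpos_pos)
  then have "Psip \<Psi> (x / M) = 0" by (simp add: Psip_def max_def Psi_0)
  then show ?thesis using Psip_nonneg[of x] assms by simp
qed

end


lemma lborel_complex:
  "(lborel :: complex measure) = distr (lborel \<Otimes>\<^sub>M lborel) borel (\<lambda>(x,y). Complex x y)"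
proof (rule lborel_eqI)
  fix l u :: complex
  assume le: "\<And>b. b \<in> Basis \<Longrightarrow> l \<bullet> b \<le> u \<bullet> b"
  have m: "(\<lambda>(x,y). Complex x y) \<in> (lborel \<Otimes>\<^sub>M lborel :: (real\<times>real) measure) \<rightarrow>\<^sub>M borel"
    by (simp add: lborel_prod case_prod_beta' borel_measurable_continuous_onI continuous_on_Complex continuous_intros)
  have "(\<lambda>(x,y). Complex x y) -` box l u \<inter> space (lborel \<Otimes>\<^sub>M lborel) = {Re l<..<Re u} \<times> {Im l<..<Im u}"
    by (auto simp: box_def Basis_complex_def space_pair_measure)
  moreover have "Re l \<le> Re u" "Im l \<le> Im u" using le[of 1] le[of \<i>] by (auto simp: Basis_complex_def)
  ultimately show "emeasure (distr (lborel \<Otimes>\<^sub>M lborel) borel (\<lambda>(x,y). Complex x y)) (box l u) = (\<Prod>b\<in>Basis. (u - l) \<bullet> b)"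
    using m by (simp add: emeasure_distr lborel.emeasure_pair_measure_Times Basis_complex_def ennreal_mult)
qed simp

lemma borel_Complex_pair [measurable]: "(\<lambda>q::real\<times>real. Complex (fst q) (snd q)) \<in> borel_measurable borel"
  by (simp add: borel_measurable_continuous_onI continuous_on_Complex continuous_intros)

lemma shearX:
  fixes g :: "real \<times> real \<Rightarrow> ennreal"
  assumes [measurable]: "g \<in> borel_measurable (lborel \<Otimes>\<^sub>M lborel)"
  shows "(\<integral>\<^sup>+ q. g (fst q + p * snd q, snd q) \<partial>(lborel \<Otimes>\<^sub>M lborel)) = (\<integral>\<^sup>+ q. g q \<partial>(lborel \<Otimes>\<^sub>M lborel))"
proof -
  have "(\<integral>\<^sup>+ q. g (fst q + p * snd q, snd q) \<partial>(lborel \<Otimes>\<^sub>M lborel)) =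
        (\<integral>\<^sup>+ y. \<integral>\<^sup>+ x. g (x + p * y, y) \<partial>lborel \<partial>lborel)"
    by (subst lborel_pair.nn_integral_snd[symmetric]) auto
  also have "\<dots> = (\<integral>\<^sup>+ y. \<integral>\<^sup>+ x. g (x, y) \<partial>lborel \<partial>lborel)"
  proof (rule nn_integral_cong)
    fix y :: real
    have "(\<integral>\<^sup>+ x. g (x, y) \<partial>lborel) = (\<integral>\<^sup>+ x. g (x, y) \<partial>(distr lborel borel ((+) (p*y))))"
      by (simp add: lborel_distr_plus)
    also have "\<dots> = (\<integral>\<^sup>+ x. g (p*y + x, y) \<partial>lborel)"
      by (subst nn_integral_distr) auto
    finally show "(\<integral>\<^sup>+ x. g (x + p * y, y) \<partial>lborel) = (\<integral>\<^sup>+ x. g (x, y) \<partial>lborel)"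
      by (simp add: add.commute)
  qed
  also have "\<dots> = (\<integral>\<^sup>+ q. g q \<partial>(lborel \<Otimes>\<^sub>M lborel))"
    by (subst lborel_pair.nn_integral_snd[symmetric]) auto
  finally show ?thesis .
qed

lemma shearY:
  fixes g :: "real \<times> real \<Rightarrow> ennreal"
  assumes [measurable]: "g \<in> borel_measurable (lborel \<Otimes>\<^sub>M lborel)"
  shows "(\<integral>\<^sup>+ q. g (fst q, snd q + p * fst q) \<partial>(lborel \<Otimes>\<^sub>M lborel)) = (\<integral>\<^sup>+ q. g q \<partial>(lborel \<Otimes>\<^sub>M lborel))"
proof -
  have "(\<integral>\<^sup>+ q. g (fst q, snd q + p * fst q) \<partial>(lborel \<Otimes>\<^sub>M lborel)) =
        (\<integral>\<^sup>+ x. \<integral>\<^sup>+ y. g (x, y + p * x) \<partial>lborel \<partial>lborel)"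
    by (subst lborel.nn_integral_fst[symmetric]) auto
  also have "\<dots> = (\<integral>\<^sup>+ x. \<integral>\<^sup>+ y. g (x, y) \<partial>lborel \<partial>lborel)"
  proof (rule nn_integral_cong)
    fix x :: real
    have "(\<integral>\<^sup>+ y. g (x, y) \<partial>lborel) = (\<integral>\<^sup>+ y. g (x, y) \<partial>(distr lborel borel ((+) (p*x))))"
      by (simp add: lborel_distr_plus)
    also have "\<dots> = (\<integral>\<^sup>+ y. g (x, p*x + y) \<partial>lborel)"
      by (subst nn_integral_distr) auto
    finally show "(\<integral>\<^sup>+ y. g (x, y + p * x) \<partial>lborel) = (\<integral>\<^sup>+ y. g (x, y) \<partial>lborel)"
      by (simp add: add.commute)
  qed
  also have "\<dots> = (\<integral>\<^sup>+ q. g q \<partial>(lborel \<Otimes>\<^sub>M lborel))"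
    by (subst lborel.nn_integral_fst[symmetric]) auto
  finally show ?thesis .
qed

lemma nn_integral_complex_pair:
  fixes h :: "complex \<Rightarrow> ennreal"
  assumes [measurable]: "h \<in> borel_measurable borel"
  shows "(\<integral>\<^sup>+ z. h z \<partial>lborel) = (\<integral>\<^sup>+ q. h (Complex (fst q) (snd q)) \<partial>(lborel \<Otimes>\<^sub>M lborel))"
proof -
  have m: "(\<lambda>x. Complex (fst x) (snd x)) \<in> (lborel \<Otimes>\<^sub>M lborel :: (real\<times>real) measure) \<rightarrow>\<^sub>M borel"
    by (simp add: lborel_prod case_prod_beta' borel_measurable_continuous_onI continuous_on_Complex continuous_intros)
  show ?thesis
    by (subst lborel_complex) (simp add: nn_integral_distr m case_prod_beta')
qed

lemma rotation_aux:
  fixes h :: "complex \<Rightarrow> ennreal"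
  assumes [measurable]: "h \<in> borel_measurable borel" and c: "norm c = 1" "c \<noteq> -1"
  shows "(\<integral>\<^sup>+ z. h (c * z) \<partial>lborel) = (\<integral>\<^sup>+ z. h z \<partial>lborel)"
proof -
  define a where "a = Re c"
  define b where "b = Im c"
  have ab: "a\<^sup>2 + b\<^sup>2 = 1" using c(1) by (simp add: a_def b_def cmod_def)
  have a1: "1 + a \<noteq> 0"
  proof
    assume "1 + a = 0"
    then have "a = -1" by simp
    with ab have "b = 0" by simp
    with \<open>a = -1\<close> have "c = -1" by (simp add: a_def b_def complex_eq_iff)
    with c show False by simp
  qed
  define t where "t = b / (1 + a)"
  have tt: "t * (1 + a) = b" unfolding t_def using a1 by simp
  have bt: "b * t = 1 - a"
  proof -
    have "b * t * (1 + a) = (1 - a) * (1 + a)"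
      using tt ab by (simp add: algebra_simps power2_eq_square)
    then show ?thesis using a1 by simp
  qed
  have key1: "(x - t*y) - t * ((y + b * (x - t*y))) = a * x - b * y" for x y
  proof -
    have "(x - t*y) - t * ((y + b * (x - t*y))) = x * (1 - b*t) - y * (t * (2 - b * t))"
      by (simp add: algebra_simps)
    also have "\<dots> = a * x - b * y"
    proof -
      have e1: "1 - b*t = a" using bt by simp
      have e3: "2 - b*t = 1 + a" using bt by simp
      have e2: "t * (2 - b*t) = b" unfolding e3 using tt .
      show ?thesis by (simp only: e1 e2) (simp add: algebra_simps)
    qed
    finally show ?thesis .
  qed
  have key2: "y + b * (x - t*y) = b * x + a * y" for x y
  proof -
    have "y + b * (x - t*y) = b * x + y * (1 - b * t)" by (simp add: algebra_simps)
    then show ?thesis using bt by (simp add: algebra_simps)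
  qed
  have key1': "(x - t*y) - t * (b * x + a * y) = a * x - b * y" for x y
    using key1[of x y] key2[of y x] by simp
  define g0 where "g0 = (\<lambda>q::real\<times>real. h (Complex (fst q) (snd q)))"
  have [measurable]: "g0 \<in> borel_measurable (lborel \<Otimes>\<^sub>M lborel)"
  proof -
    have "(\<lambda>q::real\<times>real. h (Complex (fst q) (snd q))) \<in> borel_measurable borel"
      by (rule measurable_compose[OF borel_Complex_pair]) simp
    then show ?thesis unfolding g0_def lborel_prod by simp
  qed
  have cz: "c * Complex x y = Complex (a*x - b*y) (b*x + a*y)" for x y
    by (simp add: complex_eq_iff a_def b_def)
  have "(\<integral>\<^sup>+ z. h (c * z) \<partial>lborel) = (\<integral>\<^sup>+ q. g0 (fst q - t * snd q - t * (snd q + b * (fst q - t * snd q)), snd q + b * (fst q - t * snd q)) \<partial>(lborel \<Otimes>\<^sub>M lborel))"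
    by (subst nn_integral_complex_pair) (auto simp: g0_def cz key1' key2)
  also have "\<dots> = (\<integral>\<^sup>+ q. (\<lambda>q. (\<lambda>q. g0 (fst q + (-t) * snd q, snd q)) (fst q, snd q + b * fst q)) (fst q + (-t) * snd q, snd q) \<partial>(lborel \<Otimes>\<^sub>M lborel))"
    by (simp add: algebra_simps)
  also have "\<dots> = (\<integral>\<^sup>+ q. (\<lambda>q. g0 (fst q + (-t) * snd q, snd q)) (fst q, snd q + b * fst q) \<partial>(lborel \<Otimes>\<^sub>M lborel))"
    by (rule shearX) measurable
  also have "\<dots> = (\<integral>\<^sup>+ q. g0 (fst q + (-t) * snd q, snd q) \<partial>(lborel \<Otimes>\<^sub>M lborel))"
    by (rule shearY) measurable
  also have "\<dots> = (\<integral>\<^sup>+ q. g0 q \<partial>(lborel \<Otimes>\<^sub>M lborel))"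
    by (rule shearX) measurable
  also have "\<dots> = (\<integral>\<^sup>+ z. h z \<partial>lborel)"
    by (subst nn_integral_complex_pair) (auto simp: g0_def)
  finally show ?thesis .
qed

lemma rotation_invariant:
  fixes h :: "complex \<Rightarrow> ennreal"
  assumes [measurable]: "h \<in> borel_measurable borel" and c: "norm c = 1"
  shows "(\<integral>\<^sup>+ z. h (c * z) \<partial>lborel) = (\<integral>\<^sup>+ z. h z \<partial>lborel)"
proof (cases "c = -1")
  case True
  have "(\<integral>\<^sup>+ z. h (c * z) \<partial>lborel) = (\<integral>\<^sup>+ z. (\<lambda>w. h (\<i> * w)) (\<i> * z) \<partial>lborel)"
    using True by simp
  also have "\<dots> = (\<integral>\<^sup>+ z. h (\<i> * z) \<partial>lborel)"
    by (rule rotation_aux) (auto simp: complex_eq_iff)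
  also have "\<dots> = (\<integral>\<^sup>+ z. h z \<partial>lborel)"
    by (rule rotation_aux) (auto simp: complex_eq_iff)
  finally show ?thesis .
qed (use rotation_aux c in auto)


lemma cis_dist: "norm (cis a - cis b) \<le> \<bar>a - b\<bar>"
proof -
  define x where "x = a - b"
  have "cis a - cis b = cis b * (cis x - 1)"
    unfolding x_def by (simp add: algebra_simps cis_mult)
  then have eq1: "norm (cis a - cis b) = norm (cis x - 1)" by (simp add: norm_mult)
  have "(norm (cis x - 1))^2 = (cos x - 1)^2 + (sin x)^2"
    by (simp add: cmod_power2)
  also have "\<dots> = 2 - 2 * cos x"
    using sin_cos_squared_add[of x] by (simp add: power2_eq_square algebra_simps)
  also have "\<dots> = (2 * sin (x/2))^2"
    using cos_double_sin[of "x/2"] by (simp add: power2_eq_square)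
  also have "\<dots> = \<bar>2 * sin (x/2)\<bar>^2" by simp
  finally have "norm (cis x - 1) = \<bar>2 * sin (x/2)\<bar>"
    using power2_eq_iff_nonneg[of "norm (cis x - 1)" "\<bar>2 * sin (x/2)\<bar>"] by simp
  then have "norm (cis a - cis b) = \<bar>2 * sin (x/2)\<bar>" using eq1 by simp
  also have "\<dots> \<le> 2 * \<bar>x/2\<bar>" using abs_sin_x_le_abs_x[of "x/2"] by (simp add: abs_mult)
  finally show ?thesis unfolding x_def by simp
qed

lemma pow2_unique:
  fixes n n' j j' :: nat
  assumes "2^n + j = 2^n' + j'" "j < 2^n" "j' < 2^n'"
  shows "n = n'"
proof (rule ccontr)
  assume "n \<noteq> n'"
  then consider "n < n'" | "n' < n" by linarith
  then show False
  proof cases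
    case 1
    then have "(2::nat)^(n+1) \<le> 2^n'" by (intro power_increasing) auto
    then show False using assms by simp
  next
    case 2
    then have "(2::nat)^(n'+1) \<le> 2^n" by (intro power_increasing) auto
    then show False using assms by simp
  qed
qed

lemma HL_memE:
  assumes "z \<in> HL_set k"
  obtains n j and m :: int where "k = 2^n + j - 1" "j \<le> 2^n - 1" "1 - 1/2^n \<le> norm z" "norm z < 1 - 1/2^(n+1)"
    "(2 * real j - 1) * pi / 2^n \<le> Arg z + 2*pi*m" "Arg z + 2*pi*m < (2 * real j + 1) * pi / 2^n"
  using assms unfolding HL_set_def by blast

lemma HL_nj_unique:
  fixes n j n' j' :: nat
  assumes "k = 2^n + j - 1" "j \<le> 2^n - 1" "k = 2^n' + j' - 1" "j' \<le> 2^n' - 1"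
  shows "n = n' \<and> j = j'"
proof -
  have p1: "(2::nat)^n \<ge> 1" "(2::nat)^n' \<ge> 1" by simp_all
  have e: "2^n + j = 2^n' + j'" using assms p1 by linarith
  have "j < 2^n" "j' < 2^n'" using assms p1 by linarith+
  then have "n = n'" using pow2_unique[OF e] by blast
  then show ?thesis using e by simp
qed

lemma ring_unique:
  fixes r :: real
  assumes "1 - 1/2^n \<le> r" "r < 1 - 1/2^(n+1)" "1 - 1/2^n' \<le> r" "r < 1 - 1/2^(n'+1)"
  shows "n = n'"
proof (rule ccontr)
  have aux: False if "n < n'" "1 - 1/2^n' \<le> r" "r < 1 - 1/2^(n+1)" for n n' :: nat
  proof -
    have "(2::real)^(n+1) \<le> 2^n'" using that by (intro power_increasing) auto
    then have "1/2^n' \<le> (1::real)/2^(n+1)" by (intro divide_left_mono) auto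
    then show False using that by linarith
  qed
  assume "n \<noteq> n'"
  then consider "n < n'" | "n' < n" by linarith
  then show False
  proof cases
    case 1
    show False by (rule aux[OF 1 assms(3) assms(2)])
  next
    case 2
    show False by (rule aux[OF 2 assms(1) assms(4)])
  qed
qed

lemma angle_unique:
  fixes j j' :: nat and m m' :: int and x :: real
  assumes h1: "(2*real j - 1) * pi / 2^n \<le> x + 2*pi*m" and h2: "x + 2*pi*m < (2*real j + 1)*pi/2^n"
    and h3: "(2*real j' - 1) * pi / 2^n \<le> x + 2*pi*m'" and h4: "x + 2*pi*m' < (2*real j' + 1)*pi/2^n"
    and j: "j \<le> 2^n - 1" "j' \<le> 2^n - 1"
  shows "j = j'"
proof -
  define y where "y = x * 2^n / pi"
  define P where "P = (2::real)^(n+1)"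
  have pi: "pi > 0" by simp
  have sc: "(x + 2*pi*c) * 2^n / pi = y + P * c" for c :: real
    unfolding y_def P_def using pi by (simp add: field_simps)
  have g1: "2*real j - 1 \<le> y + P * m"
  proof -
    have "(2*real j - 1) * pi / 2^n * 2^n / pi \<le> (x + 2*pi*m) * 2^n / pi"
      using h1 pi by (intro divide_right_mono mult_right_mono) auto
    then show ?thesis using pi sc[of m] by simp
  qed
  have g2: "y + P * m < 2*real j + 1"
  proof -
    have "(x + 2*pi*m) * 2^n / pi < (2*real j + 1) * pi / 2^n * 2^n / pi"
      using h2 pi by (intro divide_strict_right_mono mult_strict_right_mono) auto
    then show ?thesis using pi sc[of m] by simp
  qed
  have g3: "2*real j' - 1 \<le> y + P * m'"
  proof -
    have "(2*real j' - 1) * pi / 2^n * 2^n / pi \<le> (x + 2*pi*m') * 2^n / pi"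
      using h3 pi by (intro divide_right_mono mult_right_mono) auto
    then show ?thesis using pi sc[of m'] by simp
  qed
  have g4: "y + P * m' < 2*real j' + 1"
  proof -
    have "(x + 2*pi*m') * 2^n / pi < (2*real j' + 1) * pi / 2^n * 2^n / pi"
      using h4 pi by (intro divide_strict_right_mono mult_strict_right_mono) auto
    then show ?thesis using pi sc[of m'] by simp
  qed
  have jb: "2 * real j \<le> P - 2" "2 * real j' \<le> P - 2"
  proof -
    have "(2::nat)^n \<ge> 1" by simp
    then have "j + 1 \<le> 2^n" "j' + 1 \<le> 2^n" using j by linarith+
    then have "real (j + 1) \<le> real (2^n)" "real (j' + 1) \<le> real (2^n)" by (simp_all only: of_nat_le_iff)
    then have "real j + 1 \<le> 2^n" "real j' + 1 \<le> 2^n" by simp_all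
    then show "2 * real j \<le> P - 2" "2 * real j' \<le> P - 2" unfolding P_def by simp_all
  qed
  have lt1: "P * (m - m') < P" using g2 g3 jb by (simp add: algebra_simps)
  have lt2: "- P < P * (m - m')" using g1 g4 jb by (simp add: algebra_simps)
  have P0: "P > 0" unfolding P_def by simp
  have "real_of_int (m - m') < 1" using lt1 P0 by simp
  moreover have "-1 < real_of_int (m - m')"
  proof -
    have "P * (-1) < P * real_of_int (m - m')" using lt2 by simp
    then show ?thesis using mult_less_cancel_left_pos[OF P0] by blast
  qed
  ultimately have "m = m'" by linarith
  then have "real j < real j' + 1" "real j' < real j + 1" using g1 g2 g3 g4 by simp_all
  then show ?thesis by linarith
qed

lemma HL_disjoint:
  assumes "z \<in> HL_set k" "z \<in> HL_set k'"
  shows "k = k'"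
proof -
  obtain n j and m :: int where A: "k = 2^n + j - 1" "j \<le> 2^n - 1" "1 - 1/2^n \<le> norm z" "norm z < 1 - 1/2^(n+1)"
    "(2 * real j - 1) * pi / 2^n \<le> Arg z + 2*pi*m" "Arg z + 2*pi*m < (2 * real j + 1) * pi / 2^n"
    using assms(1) by (rule HL_memE)
  obtain n' j' and m' :: int where B: "k' = 2^n' + j' - 1" "j' \<le> 2^n' - 1" "1 - 1/2^n' \<le> norm z" "norm z < 1 - 1/2^(n'+1)"
    "(2 * real j' - 1) * pi / 2^n' \<le> Arg z + 2*pi*m'" "Arg z + 2*pi*m' < (2 * real j' + 1) * pi / 2^n'"
    using assms(2) by (rule HL_memE)
  have "n = n'" using ring_unique A(3,4) B(3,4) by blast
  then have "j = j'" using angle_unique[OF A(5,6), of j' m'] B(5,6) A(2) B(2) by simp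
  then show ?thesis using A(1) B(1) \<open>n = n'\<close> by simp
qed

lemma cis_2pi_int: "cis (x + 2*pi*real_of_int m) = cis x"
proof -
  have "cis (x + 2*pi*real_of_int m) = cis x * cis (2*pi*real_of_int m)" by (rule cis_mult[symmetric])
  also have "cis (2*pi*real_of_int m) = 1" by (rule cis_multiple_2pi) simp
  finally show ?thesis by simp
qed

lemma HL_same:
  assumes "z \<in> HL_set k" "a \<in> HL_set k"
  shows "norm z < 1" "norm (a - z) < 14 * (1 - norm z)" "1 - norm z < 2 * (1 - norm a)"
proof -
  obtain n j and m :: int where A: "k = 2^n + j - 1" "j \<le> 2^n - 1" "1 - 1/2^n \<le> norm z" "norm z < 1 - 1/2^(n+1)"
    "(2 * real j - 1) * pi / 2^n \<le> Arg z + 2*pi*m" "Arg z + 2*pi*m < (2 * real j + 1) * pi / 2^n"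
    using assms(1) by (rule HL_memE)
  obtain n' j' and m' :: int where B: "k = 2^n' + j' - 1" "j' \<le> 2^n' - 1" "1 - 1/2^n' \<le> norm a" "norm a < 1 - 1/2^(n'+1)"
    "(2 * real j' - 1) * pi / 2^n' \<le> Arg a + 2*pi*m'" "Arg a + 2*pi*m' < (2 * real j' + 1) * pi / 2^n'"
    using assms(2) by (rule HL_memE)
  from HL_nj_unique[OF A(1,2) B(1,2)] have nn: "n' = n" "j' = j" by auto
  define p :: real where "p = 1/2^n"
  have p0: "p > 0" unfolding p_def by simp
  have h: "1/2^(n+1) = p/2" unfolding p_def by simp
  have z1: "1 - p \<le> norm z" "norm z < 1 - p/2" using A(3,4) h unfolding p_def by simp_all
  have a1: "1 - p \<le> norm a" "norm a < 1 - p/2" using B(3,4) h nn unfolding p_def by simp_all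
  show "norm z < 1" using z1 p0 by simp
  show "1 - norm z < 2 * (1 - norm a)" using z1 a1 by simp
  define \<alpha> where "\<alpha> = Arg z + 2*pi*m"
  define \<beta> where "\<beta> = Arg a + 2*pi*m'"
  have wid: "(2 * real j + 1) * pi / 2^n - (2 * real j - 1) * pi / 2^n = 2 * pi * p"
    unfolding p_def by (simp add: field_simps)
  have ab: "\<bar>\<beta> - \<alpha>\<bar> < 2 * pi * p"
    using A(5,6) B(5,6) wid nn unfolding \<alpha>_def \<beta>_def by (simp add: abs_less_iff)
  have zr: "z = rcis (norm z) \<alpha>" unfolding \<alpha>_def rcis_def cis_2pi_int
    using rcis_cmod_Arg[of z] by (simp add: rcis_def)
  have ar: "a = rcis (norm a) \<beta>" unfolding \<beta>_def rcis_def cis_2pi_int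
    using rcis_cmod_Arg[of a] by (simp add: rcis_def)
  have eq: "a - z = of_real (norm a - norm z) * cis \<beta> + of_real (norm z) * (cis \<beta> - cis \<alpha>)"
  proof -
    have "rcis (norm a) \<beta> - rcis (norm z) \<alpha> = of_real (norm a - norm z) * cis \<beta> + of_real (norm z) * (cis \<beta> - cis \<alpha>)"
      by (simp add: rcis_def algebra_simps)
    moreover have "a - z = rcis (norm a) \<beta> - rcis (norm z) \<alpha>"
      by (rule arg_cong2[where f=minus, OF ar zr])
    ultimately show ?thesis by simp
  qed
  have "norm (a - z) \<le> norm (of_real (norm a - norm z) * cis \<beta>) + norm (of_real (norm z) * (cis \<beta> - cis \<alpha>))"
    unfolding eq by (rule norm_triangle_ineq)
  also have "\<dots> = \<bar>norm a - norm z\<bar> + norm z * norm (cis \<beta> - cis \<alpha>)"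
    by (simp add: norm_mult of_real_diff[symmetric] del: of_real_diff)
  also have "\<dots> \<le> \<bar>norm a - norm z\<bar> + 1 * \<bar>\<beta> - \<alpha>\<bar>"
    using z1 p0 by (intro add_left_mono mult_mono cis_dist) auto
  also have "\<dots> < p/2 + 2 * pi * p"
  proof -
    have "\<bar>norm a - norm z\<bar> < p/2" using z1 a1 unfolding abs_less_iff by linarith
    then show ?thesis using ab by simp
  qed
  also have "\<dots> \<le> 7 * p"
  proof -
    have "pi \<le> 13/4" using pi_approx(2) by simp
    then have "2 * pi * p \<le> 2 * (13/4) * p" using p0 by (intro mult_right_mono) auto
    then show ?thesis by simp
  qed
  also have "\<dots> < 14 * (1 - norm z)" using z1 by simp
  finally show "norm (a - z) < 14 * (1 - norm z)" .
qed

lemma HL_subset_ball: "HL_set k \<subseteq> ball 0 1"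
  using HL_same(1) by auto

lemma HL_subset_cball: "HL_set k \<subseteq> cball 0 (1 - 1/2^(k+1))"
proof
  fix z assume z: "z \<in> HL_set k"
  obtain n j and m :: int where A: "k = 2^n + j - 1" "j \<le> 2^n - 1" "1 - 1/2^n \<le> norm z" "norm z < 1 - 1/2^(n+1)"
    using z by (rule HL_memE)
  have "n < 2^n" by (rule less_exp)
  then have "n \<le> k" using A(1) by linarith
  then have "(2::real)^(n+1) \<le> 2^(k+1)" by (intro power_increasing) auto
  then have "1/2^(k+1) \<le> (1::real)/2^(n+1)" by (intro divide_left_mono) auto
  then show "z \<in> cball 0 (1 - 1/2^(k+1))" using A(4) by simp
qed

lemma Arg_borel [measurable]: "Arg \<in> borel_measurable borel"
proof -
  have e: "Arg = (\<lambda>z. if z \<in> \<real>\<^sub>\<le>\<^sub>0 then (if Re z < 0 then pi else 0) else indicator (- \<real>\<^sub>\<le>\<^sub>0) z *\<^sub>R Arg z)"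
    by (auto simp: fun_eq_iff Arg_real nonpos_Reals_def)
  have m1: "(\<lambda>z. indicator (- \<real>\<^sub>\<le>\<^sub>0) z *\<^sub>R Arg z) \<in> borel_measurable borel"
    by (rule borel_measurable_continuous_on_indicator) (auto intro: continuous_on_Arg)
  have m0: "(\<real>\<^sub>\<le>\<^sub>0 :: complex set) \<in> sets borel" by (rule borel_closed) simp
  have "(\<lambda>z. if z \<in> \<real>\<^sub>\<le>\<^sub>0 then (if Re z < 0 then pi else 0) else indicator (- \<real>\<^sub>\<le>\<^sub>0) z *\<^sub>R Arg z) \<in> borel_measurable borel"
    by (intro measurable_If_set m0 m1) auto
  then show ?thesis by (subst e)
qed


lemma HL_borel [measurable]: "HL_set k \<in> sets borel"
  unfolding HL_set_def by measurable


lemma cont_circ: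
  assumes "f holomorphic_on ball a R" "norm v < R"
  shows "continuous_on {0..1} (\<lambda>t. f (a + v * exp (2 * of_real pi * \<i> * of_real t)))"
proof -
  have "continuous_on {0..1} (\<lambda>t::real. a + v * exp (2 * of_real pi * \<i> * of_real t))"
    by (intro continuous_intros)
  moreover have "(\<lambda>t::real. a + v * exp (2 * of_real pi * \<i> * of_real t)) ` {0..1} \<subseteq> ball a R"
    using assms(2) by (auto simp: dist_norm norm_mult)
  ultimately show ?thesis
    using continuous_on_compose2[OF holomorphic_on_imp_continuous_on[OF assms(1)]] by blast
qed

lemma circle_mean_integral:
  assumes hol: "f holomorphic_on ball a R" and v: "norm v < R"
  shows "((\<lambda>t. f (a + v * exp (2 * of_real pi * \<i> * of_real t))) has_integral f a) {0..1}"
proof (cases "v = 0")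
  case True
  then show ?thesis using has_integral_const_real[of "f a" 0 1] by simp
next
  case False
  define \<rho> where "\<rho> = norm v"
  define e where "e = v / of_real \<rho>"
  have \<rho>: "\<rho> > 0" using False by (simp add: \<rho>_def)
  have ne: "norm e = 1" using \<rho> by (simp add: e_def \<rho>_def norm_divide)
  define F where "F = (\<lambda>w. f (a + e * (w - a)))"
  have "F holomorphic_on ball a R"
  proof -
    have "(\<lambda>w. a + e * (w - a)) ` ball a R \<subseteq> ball a R"
      using ne by (auto simp: dist_norm norm_mult norm_minus_commute)
    then show ?thesis unfolding F_def
      by (intro holomorphic_on_compose_gen[OF _ hol, unfolded o_def]) (auto intro!: holomorphic_intros)
  qed
  then have "F holomorphic_on cball a \<rho>"
    by (rule holomorphic_on_subset) (use v in \<open>auto simp: \<rho>_def\<close>)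
  from Cauchy_integral_circlepath_simple[OF this, of a] \<rho>
  have "((\<lambda>u. F u / (u - a)) has_contour_integral (2 * of_real pi * \<i> * F a)) (circlepath a \<rho>)"
    by simp
  then have "((\<lambda>t. F (circlepath a \<rho> t) * vector_derivative (circlepath a \<rho>) (at t) / (circlepath a \<rho> t - a))
         has_integral (2 * of_real pi * \<i> * F a)) {0..1}"
    by (simp add: has_contour_integral)
  then have "((\<lambda>t. (2 * of_real pi * \<i>) * f (a + v * exp (2 * of_real pi * \<i> * of_real t)))
         has_integral (2 * of_real pi * \<i> * F a)) {0..1}"
  proof (rule has_integral_eq[rotated])
    fix t :: real assume "t \<in> {0..1}"
    have vd: "vector_derivative (circlepath a \<rho>) (at t) = 2 * pi * \<i> * \<rho> * exp(2 * of_real pi * \<i> * t)"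
      by (simp add: vector_derivative_circlepath)
    have ev: "e * of_real \<rho> = v" using \<rho> by (simp add: e_def)
    show "F (circlepath a \<rho> t) * vector_derivative (circlepath a \<rho>) (at t) / (circlepath a \<rho> t - a) =
          (2 * of_real pi * \<i>) * f (a + v * exp (2 * of_real pi * \<i> * of_real t))"
      unfolding vd using \<rho> by (simp add: circlepath F_def field_simps ev[symmetric] mult.assoc)
  qed
  then have "((\<lambda>t. inverse (2 * of_real pi * \<i>) * ((2 * of_real pi * \<i>) * f (a + v * exp (2 * of_real pi * \<i> * of_real t))))
         has_integral inverse (2 * of_real pi * \<i>) * (2 * of_real pi * \<i> * F a)) {0..1}"
    by (rule has_integral_mult_right)
  note H = this
  have "((\<lambda>t. f (a + v * exp (2 * of_real pi * \<i> * of_real t))) has_integral F a) {0..1}"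
  proof -
    have c0: "(2 * of_real pi * \<i> :: complex) \<noteq> 0" by simp
    have e: "inverse (2 * of_real pi * \<i>) * ((2 * of_real pi * \<i>) * x) = x" for x :: complex
      by (subst mult.assoc[symmetric]) (simp only: left_inverse[OF c0] mult_1_left)
    show ?thesis using H unfolding e .
  qed
  then show ?thesis by (simp add: F_def)
qed

lemma circle_mean_norm:
  assumes hol: "f holomorphic_on ball a R" and v: "norm v < R"
  shows "norm (f a) \<le> integral {0..1} (\<lambda>t. norm (f (a + v * exp (2 * of_real pi * \<i> * of_real t))))"
proof -
  have c: "continuous_on {0..1} (\<lambda>t. f (a + v * exp (2 * of_real pi * \<i> * of_real t)))"
    by (rule cont_circ[OF assms])
  have "norm (integral {0..1} (\<lambda>t. f (a + v * exp (2 * of_real pi * \<i> * of_real t))))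
        \<le> integral {0..1} (\<lambda>t. norm (f (a + v * exp (2 * of_real pi * \<i> * of_real t))))"
    by (intro integral_norm_bound_integral integrable_continuous_interval c continuous_on_norm) auto
  then show ?thesis using circle_mean_integral[OF assms] by (simp add: integral_unique)
qed

lemma prob_space_unit: "prob_space (lebesgue_on {0..1::real})"
  by (rule prob_spaceI) (simp add: emeasure_restrict_space)

lemma circle_mean_Psi:
  fixes \<Psi> :: "real \<Rightarrow> real"
  assumes orl: "orlicz_function \<Psi>" and hol: "f holomorphic_on ball a R" and v: "norm v < R" and C: "C > 0"
  shows "ennreal (Psip \<Psi> (norm (f a) / C)) \<le>
    (\<integral>\<^sup>+ t. ennreal (Psip \<Psi> (norm (f (a + v * exp (2 * of_real pi * \<i> * of_real t))) / C)) * indicator {0..1} t \<partial>lborel)"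
proof -
  define X where "X = (\<lambda>t. norm (f (a + v * exp (2 * of_real pi * \<i> * of_real t))) / C)"
  define M where "M = lebesgue_on {0..1::real}"
  interpret M: prob_space M unfolding M_def by (rule prob_space_unit)
  have cX: "continuous_on {0..1} X"
    unfolding X_def using C by (intro continuous_intros cont_circ[OF hol v]) auto
  have cPX: "continuous_on {0..1} (\<lambda>t. Psip \<Psi> (X t))"
    using continuous_on_compose2[OF Psip_cont[OF orl] cX] by auto
  have iX: "integrable M X" unfolding M_def by (rule continuous_imp_integrable_real[OF cX])
  have iPX: "integrable M (\<lambda>t. Psip \<Psi> (X t))" unfolding M_def by (rule continuous_imp_integrable_real[OF cPX])
  have jen: "Psip \<Psi> (integral\<^sup>L M X) \<le> integral\<^sup>L M (\<lambda>t. Psip \<Psi> (X t))"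
    by (rule M.jensens_inequality[where I=UNIV]) (use iX iPX Psip_convex[OF orl] in auto)
  have hX: "(X has_integral integral\<^sup>L M X) {0..1}"
    unfolding M_def by (rule has_integral_integral_lebesgue_on) (use iX[unfolded M_def] in auto)
  have hPX: "((\<lambda>t. Psip \<Psi> (X t)) has_integral integral\<^sup>L M (\<lambda>t. Psip \<Psi> (X t))) {0..1}"
    unfolding M_def by (rule has_integral_integral_lebesgue_on) (use iPX[unfolded M_def] in auto)
  have "norm (f a) / C \<le> integral {0..1} (\<lambda>t. norm (f (a + v * exp (2 * of_real pi * \<i> * of_real t)))) / C"
    using circle_mean_norm[OF hol v] C by (simp add: divide_right_mono)
  also have "\<dots> = integral {0..1} X"
    unfolding X_def by simp
  also have "\<dots> = integral\<^sup>L M X" using hX by (rule integral_unique)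
  finally have "Psip \<Psi> (norm (f a) / C) \<le> Psip \<Psi> (integral\<^sup>L M X)"
    by (rule Psip_mono'[OF orl])
  also note jen
  finally have le: "Psip \<Psi> (norm (f a) / C) \<le> integral\<^sup>L M (\<lambda>t. Psip \<Psi> (X t))" .
  have "(\<integral>\<^sup>+ t. ennreal (Psip \<Psi> (X t)) * indicator {0..1} t \<partial>lborel) = ennreal (integral\<^sup>L M (\<lambda>t. Psip \<Psi> (X t)))"
    by (rule nn_integral_has_integral_lebesgue'[OF _ hPX]) (simp add: Psip_nonneg[OF orl])
  then show ?thesis using le unfolding X_def by (simp add: ennreal_leI)
qed


lemma emeasure_ball_complex: "r \<ge> 0 \<Longrightarrow> emeasure lborel (ball (c::complex) r) = ennreal (pi * r^2)"
  by (simp add: emeasure_ball unit_ball_vol_2)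

lemma submean:
  fixes \<Psi> :: "real \<Rightarrow> real"
  assumes orl: "orlicz_function \<Psi>" and hol: "f holomorphic_on ball a R" and r: "0 < r" "r \<le> R" and C: "C > 0"
  shows "ennreal (pi * r^2 * Psip \<Psi> (norm (f a) / C)) \<le>
    (\<integral>\<^sup>+ w. ennreal (indicator (ball a r) w * Psip \<Psi> (norm (f w) / C)) \<partial>lborel)"
proof -
  define G where "G = (\<lambda>w. ennreal (indicator (ball a r) w * Psip \<Psi> (norm (f w) / C)))"
  define c where "c = Psip \<Psi> (norm (f a) / C)"
  have c0: "c \<ge> 0" unfolding c_def by (rule Psip_nonneg[OF orl])
  have contf: "continuous_on (ball a r) f"
    using holomorphic_on_imp_continuous_on[OF holomorphic_on_subset[OF hol]] r by (simp add: subset_ball)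
  have "(\<lambda>w. indicator (ball a r) w *\<^sub>R Psip \<Psi> (norm (f w) / C)) \<in> borel_measurable borel"
    by (rule borel_measurable_continuous_on_indicator)
       (use C in \<open>auto intro!: continuous_on_compose2[OF Psip_cont[OF orl]] continuous_intros contf\<close>)
  then have Gm [measurable]: "G \<in> borel_measurable borel" unfolding G_def by simp
  define e where "e = (\<lambda>t::real. exp (2 * of_real pi * \<i> * of_real t))"
  have ne: "norm (e t) = 1" for t unfolding e_def by (simp add: norm_exp_eq_Re)
  have em [measurable]: "e \<in> borel_measurable borel"
    unfolding e_def by (intro borel_measurable_continuous_onI continuous_intros)
  have "(\<integral>\<^sup>+ w. G w \<partial>lborel) = (\<integral>\<^sup>+ w. G w \<partial>distr lborel borel ((+) a))"
    by (simp add: lborel_distr_plus)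
  also have "\<dots> = (\<integral>\<^sup>+ v. G (a + v) \<partial>lborel)"
    by (subst nn_integral_distr) auto
  also have "\<dots> = (\<integral>\<^sup>+ t. indicator {0..1::real} t * (\<integral>\<^sup>+ v. G (a + v) \<partial>lborel) \<partial>lborel)"
  proof -
    have i1: "(\<integral>\<^sup>+ t. indicator {0..1::real} t \<partial>lborel) = 1" by simp
    have [measurable]: "(indicator {0..1::real} :: real \<Rightarrow> ennreal) \<in> borel_measurable borel" by measurable
    show ?thesis by (subst nn_integral_multc) (simp_all add: i1)
  qed
  also have "\<dots> = (\<integral>\<^sup>+ t. (\<integral>\<^sup>+ v. indicator {0..1::real} t * G (a + e t * v) \<partial>lborel) \<partial>lborel)"
  proof (rule nn_integral_cong)
    fix t :: real
    have "(\<integral>\<^sup>+ v. G (a + v) \<partial>lborel) = (\<integral>\<^sup>+ v. (\<lambda>v. G (a + v)) (e t * v) \<partial>lborel)"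
      by (rule rotation_invariant[symmetric]) (auto simp: ne)
    then show "indicator {0..1} t * (\<integral>\<^sup>+ v. G (a + v) \<partial>lborel) = (\<integral>\<^sup>+ v. indicator {0..1} t * G (a + e t * v) \<partial>lborel)"
      by (simp add: nn_integral_cmult)
  qed
  also have "\<dots> = (\<integral>\<^sup>+ v. (\<integral>\<^sup>+ t. indicator {0..1::real} t * G (a + e t * v) \<partial>lborel) \<partial>lborel)"
    by (rule lborel_pair.Fubini'[symmetric]) measurable
  also have "\<dots> \<ge> (\<integral>\<^sup>+ v. ennreal c * indicator (ball (0::complex) r) v \<partial>lborel)"
  proof (rule nn_integral_mono)
    fix v :: complex
    show "ennreal c * indicator (ball 0 r) v \<le> (\<integral>\<^sup>+ t. indicator {0..1} t * G (a + e t * v) \<partial>lborel)"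
    proof (cases "v \<in> ball 0 r")
      case True
      then have nv: "norm v < R" using r by auto
      have "ennreal c \<le> (\<integral>\<^sup>+ t. ennreal (Psip \<Psi> (norm (f (a + v * e t)) / C)) * indicator {0..1} t \<partial>lborel)"
        unfolding c_def e_def by (rule circle_mean_Psi[OF orl hol nv C])
      also have "\<dots> = (\<integral>\<^sup>+ t. indicator {0..1} t * G (a + e t * v) \<partial>lborel)"
        using True by (intro nn_integral_cong) (auto simp: G_def dist_norm norm_mult ne mult.commute)
      finally show ?thesis using True by simp
    qed simp
  qed
  also have "(\<integral>\<^sup>+ v. ennreal c * indicator (ball (0::complex) r) v \<partial>lborel) = ennreal (pi * r^2 * c)"
    using r c0 by (subst nn_integral_cmult_indicator) (auto simp: emeasure_ball_complex ennreal_mult' mult.commute)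
  finally show ?thesis unfolding G_def c_def .
qed


definition sk :: "(complex \<Rightarrow> complex) \<Rightarrow> nat \<Rightarrow> real" where
  "sk f k = (SUP w\<in>HL_set k. norm (f w))"

lemma Lambda_terms:
  assumes k: "z \<in> HL_set k"
  shows "(\<lambda>j. sk f j * indicator (HL_set j) z) = (\<lambda>j. if j = k then sk f k else 0)"
proof (rule ext)
  fix j
  show "sk f j * indicator (HL_set j) z = (if j = k then sk f k else 0)"
  proof (cases "j = k")
    case True
    then show ?thesis using k by simp
  next
    case False
    then have "z \<notin> HL_set j" using HL_disjoint[OF k, of j] by blast
    then show ?thesis using False by simp
  qed
qed

lemma Lambda_def': "Lambda f z = (\<Sum>j. sk f j * indicator (HL_set j) z)"
  unfolding Lambda_def sk_def ..

lemma Lambda_sums: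
  "(\<lambda>j. sk f j * indicator (HL_set j) z) sums Lambda f z"
proof (cases "\<exists>k. z \<in> HL_set k")
  case True
  then obtain k where k: "z \<in> HL_set k" by blast
  have s: "(\<lambda>j. sk f j * indicator (HL_set j) z) sums sk f k"
    unfolding Lambda_terms[OF k] by (rule sums_single)
  then have "Lambda f z = sk f k" unfolding Lambda_def' by (rule sums_unique[symmetric])
  then show ?thesis using s by simp
next
  case False
  then have e: "(\<lambda>j. sk f j * indicator (HL_set j) z) = (\<lambda>j. 0)" by (simp add: fun_eq_iff)
  show ?thesis unfolding Lambda_def' e by simp
qed

lemma Lambda_in: "z \<in> HL_set k \<Longrightarrow> Lambda f z = sk f k"
proof -
  assume k: "z \<in> HL_set k"
  have s: "(\<lambda>j. sk f j * indicator (HL_set j) z) sums sk f k"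
    unfolding Lambda_terms[OF k] by (rule sums_single)
  show ?thesis using sums_unique2[OF Lambda_sums[of f z] s] .
qed

lemma Lambda_out: "(\<forall>k. z \<notin> HL_set k) \<Longrightarrow> Lambda f z = 0"
proof -
  assume "\<forall>k. z \<notin> HL_set k"
  then have e: "(\<lambda>j. sk f j * indicator (HL_set j) z) = (\<lambda>j. 0)" by (simp add: fun_eq_iff)
  show ?thesis unfolding Lambda_def' e by simp
qed

lemma Lambda_borel [measurable]: "Lambda f \<in> borel_measurable borel"
proof (rule borel_measurable_LIMSEQ_metric)
  fix i :: nat
  show "(\<lambda>z. \<Sum>j<i. sk f j * indicator (HL_set j) z) \<in> borel_measurable borel"
    by measurable
next
  fix z :: complex
  show "(\<lambda>i. \<Sum>j<i. sk f j * indicator (HL_set j) z) \<longlonglongrightarrow> Lambda f z"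
    using Lambda_sums[of f z] by (simp add: sums_def)
qed


definition gt :: "(real \<Rightarrow> real) \<Rightarrow> (complex \<Rightarrow> complex) \<Rightarrow> real \<Rightarrow> complex \<Rightarrow> real" where
  "gt \<Psi> f C w = indicator (ball 0 1) w * Psip \<Psi> (norm (f w) / C)"

definition Kset :: "(complex \<times> complex) set" where
  "Kset = {p. norm (fst p) < 1 \<and> norm (snd p) < 1 \<and> dist (snd p) (fst p) < 16 * (1 - norm (fst p))
              \<and> 1 - norm (fst p) \<le> 4 * (1 - norm (snd p))}"

definition Bz :: "(real \<Rightarrow> real) \<Rightarrow> (complex \<Rightarrow> complex) \<Rightarrow> real \<Rightarrow> complex \<Rightarrow> ennreal" where
  "Bz \<Psi> f C z = ennreal (64 / (pi * (1 - norm z)^2)) * (\<integral>\<^sup>+ w. indicator Kset (z, w) * ennreal (gt \<Psi> f C w) \<partial>lborel)"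

lemma Kset_borel [measurable]: "Kset \<in> sets borel"
proof -
  have "Kset = {p. norm (fst p) < (1::real)} \<inter> {p. norm (snd p) < (1::real)} \<inter>
     {p. dist (snd p) (fst p) < 16 * (1 - norm (fst p))} \<inter> {p::complex\<times>complex. 1 - norm (fst p) \<le> 4 * (1 - norm (snd p))}"
    by (auto simp: Kset_def)
  also have "\<dots> \<in> sets borel"
    by (intro sets.Int borel_open borel_closed open_Collect_less closed_Collect_le continuous_intros)
  finally show ?thesis .
qed

context
  fixes \<Psi> :: "real \<Rightarrow> real" and f :: "complex \<Rightarrow> complex" and C :: real
  assumes orl: "orlicz_function \<Psi>" and hol: "f holomorphic_on ball 0 1" and C: "C > 0"
begin

lemma gt_borel [measurable]: "gt \<Psi> f C \<in> borel_measurable borel"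
proof -
  have "(\<lambda>w. indicator (ball 0 1) w *\<^sub>R Psip \<Psi> (norm (f w) / C)) \<in> borel_measurable borel"
    by (rule borel_measurable_continuous_on_indicator)
       (use C in \<open>auto intro!: continuous_on_compose2[OF Psip_cont[OF orl]] continuous_intros
          holomorphic_on_imp_continuous_on[OF hol]\<close>)
  then show ?thesis unfolding gt_def[abs_def] by simp
qed

lemma gt_nonneg: "gt \<Psi> f C w \<ge> 0"
  unfolding gt_def using Psip_nonneg[OF orl] by simp

lemma point_a:
  assumes za: "z \<in> HL_set k" "a \<in> HL_set k"
  shows "ennreal (Psip \<Psi> (norm (f a) / C)) \<le> Bz \<Psi> f C z"
proof -
  define da where "da = 1 - norm a"
  define dz where "dz = 1 - norm z"
  have z1: "norm z < 1" "norm (a - z) < 14 * dz" "dz < 2 * da"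
    using HL_same[OF za] unfolding da_def dz_def by auto
  have a1: "norm a < 1" "da < 2 * dz"
    using HL_same[OF za(2,1)] unfolding da_def dz_def by auto
  have da0: "da > 0" and dz0: "dz > 0" using z1 a1 unfolding da_def dz_def by auto
  define r where "r = da / 4"
  have r0: "r > 0" "r \<le> da" using da0 unfolding r_def by auto
  have hol': "f holomorphic_on ball a da"
  proof (rule holomorphic_on_subset[OF hol])
    show "ball a da \<subseteq> ball 0 1"
    proof
      fix w assume "w \<in> ball a da"
      then have "norm (w - a) < da" by (simp add: dist_norm norm_minus_commute)
      moreover have "norm w \<le> norm a + norm (w - a)" by (rule norm_triangle_sub)
      ultimately show "w \<in> ball 0 1" unfolding da_def by simp
    qed
  qed
  define c where "c = Psip \<Psi> (norm (f a) / C)"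
  have c0: "c \<ge> 0" unfolding c_def by (rule Psip_nonneg[OF orl])
  define I where "I = (\<integral>\<^sup>+ w. indicator Kset (z, w) * ennreal (gt \<Psi> f C w) \<partial>lborel)"
  have "ennreal (pi * r^2 * c) \<le> (\<integral>\<^sup>+ w. ennreal (indicator (ball a r) w * Psip \<Psi> (norm (f w) / C)) \<partial>lborel)"
    unfolding c_def by (rule submean[OF orl hol' r0 C])
  also have "\<dots> \<le> I" unfolding I_def
  proof (rule nn_integral_mono)
    fix w :: complex
    show "ennreal (indicator (ball a r) w * Psip \<Psi> (norm (f w) / C)) \<le> indicator Kset (z, w) * ennreal (gt \<Psi> f C w)"
    proof (cases "w \<in> ball a r")
      case True
      then have wa: "norm (w - a) < r" by (simp add: dist_norm norm_minus_commute)
      have t1: "norm w \<le> norm a + norm (w - a)" by (rule norm_triangle_sub)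
      have t2: "norm a \<le> norm w + norm (w - a)" using norm_triangle_sub[of a w] by (simp add: norm_minus_commute)
      have t3: "norm (w - z) \<le> norm (w - a) + norm (a - z)" by (rule norm_diff_triangle_le[OF order_refl order_refl])
      have w1: "norm w < 1" using t1 wa a1(1) unfolding r_def da_def by (simp add: field_simps; linarith)
      have wa4: "4 * norm (w - a) < 1 - norm a" using wa unfolding r_def da_def by simp
      have c3: "norm (w - z) < 16 * (1 - norm z)" using t3 wa4 z1(2) a1(2) norm_ge_zero[of "w - a"] unfolding da_def dz_def by linarith
      have c4: "1 - norm z \<le> 4 * (1 - norm w)" using t1 wa4 z1(3) dz0 unfolding da_def dz_def by argo
      have "(z, w) \<in> Kset" unfolding Kset_def
        using w1 z1(1) c3 c4 by (simp add: dist_norm)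
      then show ?thesis using w1 True by (simp add: gt_def)
    qed simp
  qed
  finally have le: "ennreal (pi * r^2 * c) \<le> I" .
  have q0: "pi * r^2 > 0" using r0 by simp
  have "ennreal c = ennreal (1 / (pi * r^2)) * ennreal (pi * r^2 * c)"
    using q0 c0 r0 by (simp add: ennreal_mult''[symmetric])
  also have "\<dots> \<le> ennreal (1 / (pi * r^2)) * I" by (rule mult_left_mono[OF le]) simp
  also have "\<dots> \<le> ennreal (64 / (pi * dz^2)) * I"
  proof (rule mult_right_mono)
    have "dz^2 \<le> (2*da)^2" using dz0 z1(3) by (intro power_mono) auto
    then have "pi * dz^2 \<le> pi * (4 * da^2)" by (simp add: power_mult_distrib)
    then have "64 / (pi * (4 * da^2)) \<le> 64 / (pi * dz^2)"
      using dz0 da0 by (intro divide_left_mono) auto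
    moreover have "1 / (pi * r^2) = 64 / (pi * (4 * da^2))" unfolding r_def by (simp add: power2_eq_square)
    ultimately show "ennreal (1 / (pi * r^2)) \<le> ennreal (64 / (pi * dz^2))" by (simp add: ennreal_leI)
  qed simp
  finally show ?thesis unfolding Bz_def I_def c_def dz_def .
qed

lemma Psip_Sup_le:
  fixes h :: "complex \<Rightarrow> real"
  assumes X: "X \<noteq> {}" "bdd_above (h ` X)" and le: "\<And>x. x \<in> X \<Longrightarrow> Psip \<Psi> (h x / C) \<le> b"
  shows "Psip \<Psi> ((SUP x\<in>X. h x) / C) \<le> b"
proof (rule ccontr)
  define s where "s = (SUP x\<in>X. h x)"
  assume "\<not> Psip \<Psi> ((SUP x\<in>X. h x) / C) \<le> b"
  then have gt: "Psip \<Psi> (s / C) > b" unfolding s_def by simp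
  have "isCont (Psip \<Psi>) (s / C)"
    using Psip_cont[OF orl] by (simp add: continuous_on_eq_continuous_at)
  then obtain d where d: "d > 0" "\<And>y. dist y (s / C) < d \<Longrightarrow> dist (Psip \<Psi> y) (Psip \<Psi> (s / C)) < Psip \<Psi> (s / C) - b"
    using gt unfolding continuous_at_eps_delta by (metis diff_gt_0_iff_gt)
  have "s - d * C < s" using d C by simp
  then obtain x where x: "x \<in> X" "s - d * C < h x"
    using less_cSUP_iff[OF X] unfolding s_def by blast
  have "h x \<le> s" unfolding s_def by (rule cSUP_upper[OF x(1) X(2)])
  then have "dist (h x / C) (s / C) < d"
    using x(2) C by (simp add: dist_real_def abs_less_iff field_simps)
  from d(2)[OF this] have "Psip \<Psi> (h x / C) > b" by (simp add: dist_real_def abs_less_iff)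
  with le[OF x(1)] show False by simp
qed

lemma point_sup:
  assumes z: "z \<in> HL_set k"
  shows "ennreal (Psip \<Psi> (sk f k / C)) \<le> Bz \<Psi> f C z"
proof (cases "Bz \<Psi> f C z" rule: ennreal_cases)
  case (real b)
  have bdd: "bdd_above ((\<lambda>w. norm (f w)) ` HL_set k)"
  proof -
    let ?K = "cball (0::complex) (1 - 1/2^(k+1))"
    have sub: "?K \<subseteq> ball 0 1"
    proof
      fix x assume "x \<in> ?K"
      then have "norm x \<le> 1 - 1/2^(k+1)" by simp
      moreover have "0 < (1::real)/2^(k+1)" by simp
      ultimately have "norm x < 1" by linarith
      then show "x \<in> ball 0 1" by simp
    qed
    have "continuous_on ?K (\<lambda>w. norm (f w))"
      by (intro continuous_intros holomorphic_on_imp_continuous_on[OF holomorphic_on_subset[OF hol sub]])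
    then have "compact ((\<lambda>w. norm (f w)) ` ?K)" by (intro compact_continuous_image) auto
    then have "bdd_above ((\<lambda>w. norm (f w)) ` ?K)" by (intro bounded_imp_bdd_above compact_imp_bounded)
    then show ?thesis by (rule bdd_above_mono) (use HL_subset_cball[of k] in auto)
  qed
  have "Psip \<Psi> (sk f k / C) \<le> b"
    unfolding sk_def
  proof (rule Psip_Sup_le)
    show "HL_set k \<noteq> {}" using z by auto
    show "bdd_above ((\<lambda>w. norm (f w)) ` HL_set k)" by (rule bdd)
    fix a assume "a \<in> HL_set k"
    from point_a[OF z this] real show "Psip \<Psi> (norm (f a) / C) \<le> b"
      by (simp add: ennreal_le_iff)
  qed
  then show ?thesis using real by (simp add: ennreal_leI)
qed simp

lemma pointwise: "ennreal (Psip \<Psi> (Lambda f z / C)) \<le> Bz \<Psi> f C z"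
proof (cases "\<exists>k. z \<in> HL_set k")
  case True
  then obtain k where k: "z \<in> HL_set k" by blast
  show ?thesis using point_sup[OF k] Lambda_in[OF k] by simp
next
  case False
  then show ?thesis using Lambda_out[of z f] by (simp add: Psip_0[OF orl])
qed

end


context
  fixes \<Psi> :: "real \<Rightarrow> real" and f :: "complex \<Rightarrow> complex" and C :: real
  assumes orl: "orlicz_function \<Psi>" and hol: "f holomorphic_on ball 0 1" and C: "C > 0"
begin

definition HH :: "complex \<Rightarrow> complex \<Rightarrow> ennreal" where
  "HH z w = ennreal (64 / (pi * (1 - norm z)^2)) * (indicator Kset (z, w) * ennreal (gt \<Psi> f C w))"

lemma HH_meas: "(\<lambda>(z, w). HH z w) \<in> borel_measurable (lborel \<Otimes>\<^sub>M lborel)"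
proof -
  have [measurable]: "gt \<Psi> f C \<in> borel_measurable borel" by (rule gt_borel[OF orl hol C])
  have [measurable]: "Kset \<in> sets (lborel \<Otimes>\<^sub>M lborel)" unfolding lborel_prod using Kset_borel by simp
  have "(\<lambda>p::complex\<times>complex. ennreal (64 / (pi * (1 - norm (fst p))^2)) * (indicator Kset p * ennreal (gt \<Psi> f C (snd p))))
        \<in> borel_measurable (lborel \<Otimes>\<^sub>M lborel)" by measurable
  then show ?thesis unfolding HH_def by (simp add: case_prod_beta')
qed

lemma inner_bound:
  "(\<integral>\<^sup>+ z. HH z w \<partial>lborel) \<le> ennreal (64 * 289 * 4096) * ennreal (gt \<Psi> f C w)"
proof (cases "w \<in> ball 0 1")
  case False
  then have "HH z w = 0" for z unfolding HH_def gt_def by simp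
  then show ?thesis by simp
next
  case True
  define dw where "dw = 1 - norm w"
  have dw0: "dw > 0" using True unfolding dw_def by simp
  define g where "g = gt \<Psi> f C w"
  have g0: "g \<ge> 0" unfolding g_def by (rule gt_nonneg[OF orl hol C])
  define c where "c = 64 * 289 / (pi * dw^2) * g"
  have c0: "c \<ge> 0" unfolding c_def using g0 dw0 by simp
  have "(\<integral>\<^sup>+ z. HH z w \<partial>lborel) \<le> (\<integral>\<^sup>+ z. ennreal c * indicator (ball w (64 * dw)) z \<partial>lborel)"
  proof (rule nn_integral_mono)
    fix z :: complex
    show "HH z w \<le> ennreal c * indicator (ball w (64 * dw)) z"
    proof (cases "(z, w) \<in> Kset")
      case K: True
      define dz where "dz = 1 - norm z"
      have k: "norm z < 1" "norm (w - z) < 16 * dz" "dz \<le> 4 * dw"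
        using K unfolding Kset_def dz_def dw_def by (auto simp: dist_norm)
      have dz0: "dz > 0" using k unfolding dz_def by simp
      have tri: "norm z \<le> norm w + norm (w - z)" using norm_triangle_sub[of z w] by (simp add: norm_minus_commute)
      have "dw < 17 * dz" using tri k unfolding dz_def dw_def by argo
      then have "dw^2 \<le> (17 * dz)^2" using dw0 by (intro power_mono) auto
      then have le1: "pi * dw^2 / 289 \<le> pi * dz^2" by (simp add: power_mult_distrib)
      have "64 / (pi * dz^2) \<le> 64 / (pi * dw^2 / 289)"
        using dw0 dz0 le1 by (intro divide_left_mono) auto
      also have "\<dots> = 64 * 289 / (pi * dw^2)" by simp
      finally have le2: "64 / (pi * dz^2) * g \<le> 64 * 289 / (pi * dw^2) * g"
        using g0 by (intro mult_right_mono) auto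
      have inb: "z \<in> ball w (64 * dw)" using k by (simp add: dist_norm)
      have "HH z w = ennreal (64 / (pi * dz^2) * g)"
        using K g0 dz0 unfolding HH_def g_def dz_def by (subst ennreal_mult'') auto
      also have "\<dots> \<le> ennreal c" unfolding c_def using le2 by (rule ennreal_leI)
      finally show ?thesis using inb by simp
    next
      case False
      then show ?thesis unfolding HH_def by simp
    qed
  qed
  also have "\<dots> = ennreal c * emeasure lborel (ball w (64 * dw))"
    by (rule nn_integral_cmult_indicator) simp
  also have "\<dots> = ennreal (c * (pi * (64 * dw)^2))"
    using dw0 c0 by (simp add: emeasure_ball_complex ennreal_mult'')
  also have "c * (pi * (64 * dw)^2) = 64 * 289 * 4096 * g"
    unfolding c_def using dw0 by (simp add: field_simps power2_eq_square)
  finally show ?thesis using g0 by (simp add: g_def ennreal_mult'')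
qed

lemma integral_bound:
  "(\<integral>\<^sup>+ z. ennreal (Psip \<Psi> (Lambda f z / C)) * indicator (ball 0 1) z \<partial>lborel)
     \<le> ennreal (64 * 289 * 4096) * (\<integral>\<^sup>+ w. ennreal (gt \<Psi> f C w) \<partial>lborel)"
proof -
  have [measurable]: "gt \<Psi> f C \<in> borel_measurable borel" by (rule gt_borel[OF orl hol C])
  have "(\<integral>\<^sup>+ z. ennreal (Psip \<Psi> (Lambda f z / C)) * indicator (ball 0 1) z \<partial>lborel) \<le> (\<integral>\<^sup>+ z. Bz \<Psi> f C z \<partial>lborel)"
  proof (rule nn_integral_mono)
    fix z
    have "ennreal (Psip \<Psi> (Lambda f z / C)) * indicator (ball 0 1) z \<le> ennreal (Psip \<Psi> (Lambda f z / C))"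
      by (simp add: indicator_def)
    also have "\<dots> \<le> Bz \<Psi> f C z" by (rule pointwise[OF orl hol C])
    finally show "ennreal (Psip \<Psi> (Lambda f z / C)) * indicator (ball 0 1) z \<le> Bz \<Psi> f C z" .
  qed
  also have "(\<integral>\<^sup>+ z. Bz \<Psi> f C z \<partial>lborel) = (\<integral>\<^sup>+ z. (\<integral>\<^sup>+ w. HH z w \<partial>lborel) \<partial>lborel)"
  proof (rule nn_integral_cong)
    fix z :: complex
    show "Bz \<Psi> f C z = (\<integral>\<^sup>+ w. HH z w \<partial>lborel)"
      unfolding Bz_def HH_def by (rule nn_integral_cmult[symmetric]) measurable
  qed
  also have "\<dots> = (\<integral>\<^sup>+ w. (\<integral>\<^sup>+ z. HH z w \<partial>lborel) \<partial>lborel)"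
    by (rule lborel_pair.Fubini'[symmetric, OF HH_meas])
  also have "\<dots> \<le> (\<integral>\<^sup>+ w. ennreal (64 * 289 * 4096) * ennreal (gt \<Psi> f C w) \<partial>lborel)"
    by (rule nn_integral_mono) (rule inner_bound)
  also have "\<dots> = ennreal (64 * 289 * 4096) * (\<integral>\<^sup>+ w. ennreal (gt \<Psi> f C w) \<partial>lborel)"
    by (rule nn_integral_cmult) measurable
  finally show ?thesis .
qed

end


lemma borel_areaD:
  assumes "h \<in> borel_measurable borel"
  shows "h \<in> borel_measurable areaD"
proof -
  have "h \<in> borel_measurable lborel" using assms by simp
  then have "h \<in> borel_measurable (restrict_space lborel (ball 0 1))" by (rule measurable_restrict_space1)
  then show ?thesis unfolding areaD_def by (simp add: measurable_cong_sets[OF sets_density refl])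
qed

lemma areaD_nn:
  assumes [measurable]: "h \<in> borel_measurable borel"
  shows "(\<integral>\<^sup>+ z. h z \<partial>areaD) = ennreal (1/pi) * (\<integral>\<^sup>+ z. h z * indicator (ball 0 1) z \<partial>lborel)"
proof -
  have [measurable]: "ball (0::complex) 1 \<in> sets borel" by simp
  have hm: "h \<in> borel_measurable (restrict_space lborel (ball 0 1))"
    by (rule measurable_restrict_space1) simp
  have "(\<integral>\<^sup>+ z. h z \<partial>areaD) = (\<integral>\<^sup>+ z. ennreal (1/pi) * h z \<partial>restrict_space lborel (ball 0 1))"
    unfolding areaD_def by (rule nn_integral_density) (use hm in auto)
  also have "\<dots> = (\<integral>\<^sup>+ z. ennreal (1/pi) * h z * indicator (ball 0 1) z \<partial>lborel)"
    by (subst nn_integral_restrict_space) auto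
  also have "\<dots> = ennreal (1/pi) * (\<integral>\<^sup>+ z. h z * indicator (ball 0 1) z \<partial>lborel)"
    by (subst nn_integral_cmult[symmetric]) (auto simp: mult.assoc)
  finally show ?thesis .
qed

lemma space_areaD: "space areaD = ball 0 1"
  unfolding areaD_def by (simp add: space_restrict_space)

definition M0 :: real where "M0 = 64 * 289 * 4096"

context
  fixes \<Psi> :: "real \<Rightarrow> real" and f :: "complex \<Rightarrow> complex"
  assumes orl: "orlicz_function \<Psi>" and hol: "f holomorphic_on ball 0 1"
begin

lemma bdd_HL: "bdd_above ((\<lambda>w. norm (f w)) ` HL_set k)"
proof -
  let ?K = "cball (0::complex) (1 - 1/2^(k+1))"
  have sub: "?K \<subseteq> ball 0 1"
  proof
    fix x assume "x \<in> ?K"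
    then have "norm x \<le> 1 - 1/2^(k+1)" by simp
    moreover have "0 < (1::real)/2^(k+1)" by simp
    ultimately have "norm x < 1" by linarith
    then show "x \<in> ball 0 1" by simp
  qed
  have "continuous_on ?K (\<lambda>w. norm (f w))"
    by (intro continuous_intros holomorphic_on_imp_continuous_on[OF holomorphic_on_subset[OF hol sub]])
  then have "compact ((\<lambda>w. norm (f w)) ` ?K)" by (intro compact_continuous_image) auto
  then have "bdd_above ((\<lambda>w. norm (f w)) ` ?K)" by (intro bounded_imp_bdd_above compact_imp_bounded)
  then show ?thesis by (rule bdd_above_mono) (use HL_subset_cball[of k] in auto)
qed

lemma Lambda_nonneg: "Lambda f z \<ge> 0"
proof (cases "\<exists>k. z \<in> HL_set k")
  case True
  then obtain k where k: "z \<in> HL_set k" by blast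
  have "norm (f z) \<le> sk f k" unfolding sk_def by (rule cSUP_upper[OF k bdd_HL])
  then show ?thesis using Lambda_in[OF k] by (metis norm_ge_zero order_trans)
next
  case False
  then show ?thesis using Lambda_out[of z f] by simp
qed

lemma modular_f:
  assumes C: "C > 0"
  shows "orlicz_modular \<Psi> f C = ennreal (1/pi) * (\<integral>\<^sup>+ w. ennreal (gt \<Psi> f C w) \<partial>lborel)"
proof -
  have [measurable]: "gt \<Psi> f C \<in> borel_measurable borel" by (rule gt_borel[OF orl hol C])
  have "orlicz_modular \<Psi> f C = (\<integral>\<^sup>+ z. ennreal (gt \<Psi> f C z) \<partial>areaD)"
    unfolding orlicz_modular_def
  proof (rule nn_integral_cong)
    fix z assume "z \<in> space areaD"
    then have z: "z \<in> ball 0 1" by (simp add: space_areaD)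
    have "0 \<le> norm (f z) / C" using C by simp
    then have "\<Psi> (norm (f z) / C) = Psip \<Psi> (norm (f z) / C)" by (simp add: Psip_def)
    then show "ennreal (\<Psi> (norm (f z) / C)) = ennreal (gt \<Psi> f C z)" using z by (simp add: gt_def)
  qed
  also have "\<dots> = ennreal (1/pi) * (\<integral>\<^sup>+ z. ennreal (gt \<Psi> f C z) * indicator (ball 0 1) z \<partial>lborel)"
    by (rule areaD_nn) measurable
  also have "(\<integral>\<^sup>+ z. ennreal (gt \<Psi> f C z) * indicator (ball 0 1) z \<partial>lborel) = (\<integral>\<^sup>+ z. ennreal (gt \<Psi> f C z) \<partial>lborel)"
    by (rule nn_integral_cong) (simp add: gt_def indicator_def)
  finally show ?thesis .
qed

lemma modular_Lambda:
  assumes C: "C > 0"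
  shows "orlicz_modular \<Psi> (Lambda f) (M0 * C) \<le> orlicz_modular \<Psi> f C"
proof -
  have M1: "M0 \<ge> 1" unfolding M0_def by simp
  have M0p: "M0 > 0" unfolding M0_def by simp
  have [measurable]: "Psip \<Psi> \<in> borel_measurable borel" by (rule Psip_borel[OF orl])
  have [measurable]: "ball (0::complex) 1 \<in> sets borel" by simp
  have "orlicz_modular \<Psi> (Lambda f) (M0 * C) = (\<integral>\<^sup>+ z. ennreal (Psip \<Psi> (Lambda f z / (M0 * C))) \<partial>areaD)"
    unfolding orlicz_modular_def
  proof (rule nn_integral_cong)
    fix z
    show "ennreal (\<Psi> (norm (Lambda f z) / (M0 * C))) = ennreal (Psip \<Psi> (Lambda f z / (M0 * C)))"
    proof -
      have "0 \<le> Lambda f z / (M0 * C)" using Lambda_nonneg[of z] C M0p by simp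
      then show ?thesis using Lambda_nonneg[of z] by (simp add: Psip_def)
    qed
  qed
  also have "\<dots> = ennreal (1/pi) * (\<integral>\<^sup>+ z. ennreal (Psip \<Psi> (Lambda f z / (M0 * C))) * indicator (ball 0 1) z \<partial>lborel)"
    by (rule areaD_nn) measurable
  also have "\<dots> \<le> ennreal (1/pi) * (\<integral>\<^sup>+ z. ennreal (1/M0) * (ennreal (Psip \<Psi> (Lambda f z / C)) * indicator (ball 0 1) z) \<partial>lborel)"
  proof (intro mult_left_mono nn_integral_mono)
    fix z
    have "Psip \<Psi> (Lambda f z / C / M0) \<le> Psip \<Psi> (Lambda f z / C) / M0" by (rule Psip_scale[OF orl M1])
    then have "ennreal (Psip \<Psi> (Lambda f z / (M0 * C))) \<le> ennreal (1/M0) * ennreal (Psip \<Psi> (Lambda f z / C))"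
    proof -
      have e1: "ennreal (1/M0) * ennreal (Psip \<Psi> (Lambda f z / C)) = ennreal (1/M0 * Psip \<Psi> (Lambda f z / C))"
        using M0p Psip_nonneg[OF orl] by (subst ennreal_mult'') auto
      have e2: "Lambda f z / (M0 * C) = Lambda f z / C / M0" by (simp add: mult.commute)
      show ?thesis unfolding e1 e2 by (rule ennreal_leI) (use \<open>Psip \<Psi> (Lambda f z / C / M0) \<le> _\<close> in simp)
    qed
    then show "ennreal (Psip \<Psi> (Lambda f z / (M0 * C))) * indicator (ball 0 1) z
        \<le> ennreal (1/M0) * (ennreal (Psip \<Psi> (Lambda f z / C)) * indicator (ball 0 1) z)"
      by (simp add: indicator_def)
  qed simp
  also have "\<dots> = ennreal (1/pi) * (ennreal (1/M0) * (\<integral>\<^sup>+ z. ennreal (Psip \<Psi> (Lambda f z / C)) * indicator (ball 0 1) z \<partial>lborel))"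
    by (subst nn_integral_cmult) auto
  also have "\<dots> \<le> ennreal (1/pi) * (ennreal (1/M0) * (ennreal M0 * (\<integral>\<^sup>+ w. ennreal (gt \<Psi> f C w) \<partial>lborel)))"
    using integral_bound[OF orl hol C] unfolding M0_def by (intro mult_left_mono) auto
  also have "ennreal (1/M0) * (ennreal M0 * X) = X" for X
    using M0p by (simp add: mult.assoc[symmetric] ennreal_mult''[symmetric])
  also have "ennreal (1/pi) * (\<integral>\<^sup>+ w. ennreal (gt \<Psi> f C w) \<partial>lborel) = orlicz_modular \<Psi> f C"
    by (rule modular_f[OF C, symmetric])
  finally show ?thesis .
qed

end


theorem lemma2p2:
  fixes \<Psi> :: "real \<Rightarrow> real"
  assumes "orlicz_function \<Psi>"
  shows "\<exists>C>0. \<forall>f. in_Bergman_Orlicz \<Psi> f \<longrightarrow>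
           in_Orlicz \<Psi> (Lambda f) \<and> lux_norm \<Psi> (Lambda f) \<le> C * lux_norm \<Psi> f"
proof -
  note orl = assms
  have M0p: "M0 > 0" unfolding M0_def by simp
  show ?thesis
  proof (rule exI[of _ M0], intro conjI allI impI)
    show "M0 > 0" by (rule M0p)
    fix f assume "in_Bergman_Orlicz \<Psi> f"
    then have hol: "f holomorphic_on ball 0 1" and ex: "\<exists>C>0. orlicz_modular \<Psi> f C \<le> 1"
      unfolding in_Bergman_Orlicz_def in_Orlicz_def by auto
    have key: "orlicz_modular \<Psi> (Lambda f) (M0 * C) \<le> orlicz_modular \<Psi> f C" if "C > 0" for C
      by (rule modular_Lambda[OF orl hol that])
    obtain C0 where C0: "C0 > 0" "orlicz_modular \<Psi> f C0 \<le> 1" using ex by blast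
    show "in_Orlicz \<Psi> (Lambda f)"
      unfolding in_Orlicz_def
    proof
      show "Lambda f \<in> borel_measurable areaD" by (rule borel_areaD[OF Lambda_borel])
      show "\<exists>C>0. orlicz_modular \<Psi> (Lambda f) C \<le> 1"
        using C0 M0p key[OF C0(1)] by (intro exI[of _ "M0 * C0"]) auto
    qed
    define SL where "SL = {C. C > 0 \<and> orlicz_modular \<Psi> (Lambda f) C \<le> 1}"
    define SF where "SF = {C. C > 0 \<and> orlicz_modular \<Psi> f C \<le> 1}"
    have bL: "bdd_below SL" unfolding SL_def by (rule bdd_belowI[of _ 0]) auto
    have nF: "SF \<noteq> {}" using C0 unfolding SF_def by auto
    have "Inf SL / M0 \<le> Inf SF"
    proof (rule cInf_greatest[OF nF])
      fix C assume "C \<in> SF"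
      then have C: "C > 0" "orlicz_modular \<Psi> f C \<le> 1" unfolding SF_def by auto
      have "M0 * C \<in> SL" unfolding SL_def using C M0p key[OF C(1)] by auto
      then have "Inf SL \<le> M0 * C" by (rule cInf_lower[OF _ bL])
      then show "Inf SL / M0 \<le> C" using M0p by (simp add: field_simps)
    qed
    then have "Inf SL \<le> M0 * Inf SF" using M0p by (simp add: field_simps)
    then show "lux_norm \<Psi> (Lambda f) \<le> M0 * lux_norm \<Psi> f"
      unfolding lux_norm_def SL_def SF_def .
  qed
qed


end
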